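(* Let $m\ge2$ and, for $1\le k\le m$, let $\tilde\tau_k=t_{k+m-1}t_{k+m-2}\cdots t_{k+1}t_kt_{k+1}\cdots t_{k+m-2}t_{k+m-1}\in\tilde{\mathcal S}_{2m}$ and $\tilde\tau=\tilde\tau_1\tilde\tau_2\cdots\tilde\tau_m$. Then for all $1\le i\le m-1$ we have $\tilde\tau^{-1}t_i\tilde\tau=z^mt_{i+m}$ and $\tilde\tau^{-1}t_{i+m}\tilde\tau=z^mt_i$.
   Context: $\tilde{\mathcal S}_{2m}$ is the group with presentation $\langle z,t_1,\dots,t_{2m-1}\mid z^2=1,\ t_i^2=z\ (1\le i\le 2m-1),\ (t_it_{i+1})^3=z\ (1\le i\le 2m-2),\ t_it_j=zt_jt_i\ (|i-j|>1)\rangle$. (The element $\tilde\tau$ is a lift of the permutation $(1,m+1)(2,m+2)\cdots(m,2m)$ under $t_i\mapsto(i,i+1)$.) *)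

theory Defs
  imports "HOL-Algebra.Group"
begin

definition gprod :: "('a, 'b) monoid_scheme \<Rightarrow> 'a list \<Rightarrow> 'a" where
  "gprod G xs = foldr (\<lambda>x y. x \<otimes>\<^bsub>G\<^esub> y) xs \<one>\<^bsub>G\<^esub>"

text \<open>The defining relations of the double cover of S_{2m}, with generators z and
  t 1, ..., t (2m-1).  A statement holds in the group given by the presentation iff it holds
  for every group G and elements satisfying these relations.\<close>
definition tilde_S_rels :: "('a, 'b) monoid_scheme \<Rightarrow> nat \<Rightarrow> 'a \<Rightarrow> (nat \<Rightarrow> 'a) \<Rightarrow> bool" where
  "tilde_S_rels G m z t \<longleftrightarrow>
     z \<in> carrier G \<and> (\<forall>i. 1 \<le> i \<and> i \<le> 2*m - 1 \<longrightarrow> t i \<in> carrier G) \<and>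
     z \<otimes>\<^bsub>G\<^esub> z = \<one>\<^bsub>G\<^esub> \<and>
     (\<forall>i. 1 \<le> i \<and> i \<le> 2*m - 1 \<longrightarrow> t i \<otimes>\<^bsub>G\<^esub> t i = z) \<and>
     (\<forall>i. 1 \<le> i \<and> i \<le> 2*m - 2 \<longrightarrow> (t i \<otimes>\<^bsub>G\<^esub> t (i+1)) [^]\<^bsub>G\<^esub> (3::nat) = z) \<and>
     (\<forall>i j. 1 \<le> i \<and> i \<le> 2*m - 1 \<and> 1 \<le> j \<and> j \<le> 2*m - 1 \<and> (i + 1 < j \<or> j + 1 < i)
        \<longrightarrow> t i \<otimes>\<^bsub>G\<^esub> t j = z \<otimes>\<^bsub>G\<^esub> t j \<otimes>\<^bsub>G\<^esub> t i)"

definition tau_k :: "('a, 'b) monoid_scheme \<Rightarrow> nat \<Rightarrow> (nat \<Rightarrow> 'a) \<Rightarrow> nat \<Rightarrow> 'a" where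
  "tau_k G m t k = gprod G (map t (rev [k+1..<k+m] @ [k] @ [k+1..<k+m]))"

definition tau :: "('a, 'b) monoid_scheme \<Rightarrow> nat \<Rightarrow> (nat \<Rightarrow> 'a) \<Rightarrow> 'a" where
  "tau G m t = gprod G (map (tau_k G m t) [1..<m+1])"

end

theory Submission
  imports Defs
begin

definition wd :: "nat \<Rightarrow> nat \<Rightarrow> nat list" where
  "wd a b = rev [a+1..<b] @ [a] @ [a+1..<b]"

lemma wd_base: "wd a (Suc a) = [a]" by (simp add: wd_def)
lemma wd_Suc: "a < b \<Longrightarrow> wd a (Suc b) = b # wd a b @ [b]" by (simp add: wd_def)
lemma len_wd: "a < b \<Longrightarrow> length (wd a b) = 2*(b-a) - 1" by (simp add: wd_def)
lemma set_wd: "a < b \<Longrightarrow> set (wd a b) = {a..<b}" by (auto simp: wd_def)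

definition sw :: "nat \<Rightarrow> nat \<Rightarrow> nat" where
  "sw j x = (if x = j then Suc j else if x = Suc j then j else x)"

fun sg :: "nat list \<Rightarrow> nat \<Rightarrow> nat" where
  "sg [] x = x" | "sg (j#w) x = sg w (sw j x)"

lemma sg_app: "sg (u@v) x = sg v (sg u x)"
  by (induct u arbitrary: x) auto

lemma sg_up: "a \<le> b \<Longrightarrow> sg [a..<b] x = (if x = a then b else if a < x \<and> x \<le> b then x-1 else x)"
proof (induct b arbitrary: x)
  case 0 then show ?case by simp
next
  case (Suc b) then show ?case by (cases "a = Suc b") (auto simp: sg_app sw_def)
qed

lemma sg_down: "a \<le> b \<Longrightarrow> sg (rev [a..<b]) x = (if x = b then a else if a \<le> x \<and> x < b then x+1 else x)"
proof (induct b arbitrary: x)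
  case 0 then show ?case by simp
next
  case (Suc b) then show ?case by (cases "a = Suc b") (auto simp: sg_app sw_def)
qed

lemma sg_wd: "1 \<le> m \<Longrightarrow> sg (wd k (k+m)) x = (if x = k then k+m else if x = k+m then k else x)"
  by (simp add: wd_def sg_app sg_up sg_down sw_def)

lemma sg_W: "n \<le> m \<Longrightarrow> 1 \<le> m \<Longrightarrow> sg (concat (map (\<lambda>k. wd k (k+m)) [1..<n+1])) x =
   (if 1 \<le> x \<and> x \<le> n then x+m else if m+1 \<le> x \<and> x \<le> m+n then x-m else x)"
proof (induct n arbitrary: x)
  case 0 then show ?case by simp
next
  case (Suc n)
  have e: "concat (map (\<lambda>k. wd k (k+m)) [1..<Suc n+1]) = concat (map (\<lambda>k. wd k (k+m)) [1..<n+1]) @ wd (Suc n) (Suc n + m)"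
    by simp
  have IH: "sg (concat (map (\<lambda>k. wd k (k+m)) [1..<n+1])) y =
   (if 1 \<le> y \<and> y \<le> n then y+m else if m+1 \<le> y \<and> y \<le> m+n then y-m else y)" for y
    using Suc by simp
  have W: "sg (wd (Suc n) (Suc n + m)) y = (if y = Suc n then Suc n+m else if y = Suc n+m then Suc n else y)" for y
    using Suc.prems sg_wd[of m "Suc n" y] by simp
  show ?case unfolding e sg_app IH W using Suc.prems by auto
qed

lemma len_W: "1 \<le> m \<Longrightarrow> length (concat (map (\<lambda>k. wd k (k+m)) [1..<n+1])) = n * (2*m-1)"
proof (induct n)
  case 0 then show ?case by simp
next
  case (Suc n) then show ?case by (simp add: len_wd)
qed

locale tS = group G for G :: "('a,'b) monoid_scheme" (structure) +
  fixes m :: nat and z :: 'a and t :: "nat \<Rightarrow> 'a"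
  assumes rels: "tilde_S_rels G m z t" and m2: "m \<ge> 2"
begin

definition P where "P w = gprod G (map t w)"

lemma zc[simp]: "z \<in> carrier G" using rels unfolding tilde_S_rels_def by auto
lemma tc[simp]: "1 \<le> i \<Longrightarrow> i \<le> 2*m-1 \<Longrightarrow> t i \<in> carrier G"
  using rels unfolding tilde_S_rels_def by auto
lemma zz: "z \<otimes> z = \<one>" using rels unfolding tilde_S_rels_def by auto
lemma tt: "1 \<le> i \<Longrightarrow> i \<le> 2*m-1 \<Longrightarrow> t i \<otimes> t i = z"
  using rels unfolding tilde_S_rels_def by auto
lemma far: "\<lbrakk>1 \<le> i; i \<le> 2*m-1; 1 \<le> j; j \<le> 2*m-1; i+1<j \<or> j+1<i\<rbrakk> \<Longrightarrow> t i \<otimes> t j = z \<otimes> t j \<otimes> t i"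
  using rels unfolding tilde_S_rels_def by auto
lemma cube: "1 \<le> i \<Longrightarrow> i+1 \<le> 2*m-1 \<Longrightarrow> (t i \<otimes> t (i+1)) [^] (3::nat) = z"
  using rels unfolding tilde_S_rels_def by auto

lemma zz'[simp]: "x \<in> carrier G \<Longrightarrow> z \<otimes> (z \<otimes> x) = x"
  by (simp add: zz flip: m_assoc)
lemma tt'[simp]: "1 \<le> i \<Longrightarrow> i \<le> 2*m-1 \<Longrightarrow> x \<in> carrier G \<Longrightarrow> t i \<otimes> (t i \<otimes> x) = z \<otimes> x"
  by (simp add: tt flip: m_assoc)
lemma zt: "1 \<le> i \<Longrightarrow> i \<le> 2*m-1 \<Longrightarrow> t i \<otimes> z = z \<otimes> t i"
  by (metis m_assoc tc tt)
lemma zt'[simp]: "1 \<le> i \<Longrightarrow> i \<le> 2*m-1 \<Longrightarrow> x \<in> carrier G \<Longrightarrow> t i \<otimes> (z \<otimes> x) = z \<otimes> (t i \<otimes> x)"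
  by (simp add: zt flip: m_assoc)
lemma far': "\<lbrakk>1 \<le> i; i \<le> 2*m-1; 1 \<le> j; j \<le> 2*m-1; i+1<j \<or> j+1<i; x \<in> carrier G\<rbrakk> \<Longrightarrow> t i \<otimes> (t j \<otimes> x) = z \<otimes> (t j \<otimes> (t i \<otimes> x))"
  by (simp add: far flip: m_assoc)

lemma braid: assumes "1 \<le> i" "i+1 \<le> 2*m-1"
  shows "t i \<otimes> t (i+1) \<otimes> t i = t (i+1) \<otimes> t i \<otimes> t (i+1)"
proof -
  have c: "t i \<otimes> (t (i+1) \<otimes> (t i \<otimes> (t (i+1) \<otimes> (t i \<otimes> t (i+1))))) = z"
    using cube[OF assms] assms by (simp add: numeral_3_eq_3 m_assoc)
  have d: "t (i+1) \<otimes> (t i \<otimes> (t (i+1) \<otimes> (t (i+1) \<otimes> (t i \<otimes> t (i+1))))) = z"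
    using assms by (simp add: tt flip: m_assoc) (simp add: m_assoc zt tt)
  have "(t i \<otimes> t (i+1) \<otimes> t i) \<otimes> (t (i+1) \<otimes> t i \<otimes> t (i+1)) = (t (i+1) \<otimes> t i \<otimes> t (i+1)) \<otimes> (t (i+1) \<otimes> t i \<otimes> t (i+1))"
    using c d assms by (simp add: m_assoc)
  then show ?thesis using assms by (simp add: right_cancel)
qed

lemma braid': "1 \<le> i \<Longrightarrow> Suc i \<le> 2*m-1 \<Longrightarrow> x \<in> carrier G \<Longrightarrow>
   t i \<otimes> (t (Suc i) \<otimes> (t i \<otimes> x)) = t (Suc i) \<otimes> (t i \<otimes> (t (Suc i) \<otimes> x))"
  using braid by (simp flip: m_assoc)

definition ok :: "nat list \<Rightarrow> bool" where "ok w \<longleftrightarrow> (\<forall>x\<in>set w. 1 \<le> x \<and> x \<le> 2*m-1)"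

lemma P_Nil[simp]: "P [] = \<one>" by (simp add: gprod_def P_def)
lemma P_Cons[simp]: "P (x#w) = t x \<otimes> P w" by (simp add: gprod_def P_def)
lemma P_c[simp]: "ok w \<Longrightarrow> P w \<in> carrier G"
  by (induct w) (auto simp: ok_def)
lemma P_app: "ok u \<Longrightarrow> ok v \<Longrightarrow> P (u@v) = P u \<otimes> P v"
  by (induct u) (auto simp: ok_def m_assoc)
lemma ok_app[simp]: "ok (u@v) = (ok u \<and> ok v)" by (auto simp: ok_def)
lemma ok_Cons[simp]: "ok (x#v) = (1 \<le> x \<and> x \<le> 2*m-1 \<and> ok v)" by (auto simp: ok_def)
lemma ok_Nil[simp]: "ok []" by (auto simp: ok_def)
lemma ok_rev[simp]: "ok (rev v) = ok v" by (auto simp: ok_def)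

lemma zP: "ok w \<Longrightarrow> z \<otimes> P w = P w \<otimes> z"
proof (induct w)
  case Nil then show ?case by simp
next
  case (Cons x w)
  have "z \<otimes> P (x#w) = t x \<otimes> (z \<otimes> P w)" using Cons.prems by (simp add: m_assoc)
  also have "\<dots> = t x \<otimes> (P w \<otimes> z)" using Cons by simp
  finally show ?case using Cons by (simp add: m_assoc)
qed

lemma zpow: "z [^] (n::nat) = (if even n then \<one> else z)"
  by (induct n) (auto simp: zz)

lemma farP: "ok w \<Longrightarrow> 1 \<le> j \<Longrightarrow> j \<le> 2*m-1 \<Longrightarrow> (\<forall>x\<in>set w. x+1<j \<or> j+1<x) \<Longrightarrow>
   P w \<otimes> t j = z [^] length w \<otimes> t j \<otimes> P w"
proof (induct w)
  case Nil then show ?case by simp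
next
  case (Cons x w)
  then have IH: "P w \<otimes> t j = z [^] length w \<otimes> t j \<otimes> P w" by auto
  have "P (x#w) \<otimes> t j = t x \<otimes> (P w \<otimes> t j)" using Cons by (simp add: m_assoc)
  also have "\<dots> = t x \<otimes> (z [^] length w \<otimes> (t j \<otimes> P w))" using Cons IH by (simp add: m_assoc)
  also have "\<dots> = z [^] length w \<otimes> (t x \<otimes> (t j \<otimes> P w))" using Cons by (simp add: zpow)
  also have "\<dots> = z [^] length w \<otimes> (z \<otimes> (t j \<otimes> (t x \<otimes> P w)))" using Cons by (simp add: far')
  also have "\<dots> = z [^] length (x#w) \<otimes> t j \<otimes> P (x#w)" using Cons by (simp add: zpow m_assoc zz flip: m_assoc)
  finally show ?case .
qed

definition Eup where "Eup a b = P (wd a b)"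

lemma ok_wd[simp]: "1 \<le> a \<Longrightarrow> a < b \<Longrightarrow> b \<le> 2*m \<Longrightarrow> ok (wd a b)"
  by (auto simp: ok_def set_wd)
lemma Ec[simp]: "1 \<le> a \<Longrightarrow> a < b \<Longrightarrow> b \<le> 2*m \<Longrightarrow> Eup a b \<in> carrier G"
  by (simp add: Eup_def)
lemma E_base: "Eup a (Suc a) = t a \<otimes> \<one>" by (simp add: Eup_def wd_base)
lemma E_Suc: "1 \<le> a \<Longrightarrow> a < b \<Longrightarrow> Suc b \<le> 2*m \<Longrightarrow> Eup a (Suc b) = t b \<otimes> (Eup a b \<otimes> t b)"
  by (simp add: Eup_def wd_Suc P_app)
lemma E_far: "1 \<le> a \<Longrightarrow> a < b \<Longrightarrow> b \<le> 2*m \<Longrightarrow> 1 \<le> j \<Longrightarrow> j \<le> 2*m-1 \<Longrightarrow> j+1<a \<or> b<j \<Longrightarrow>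
   Eup a b \<otimes> t j = z \<otimes> (t j \<otimes> Eup a b)"
proof -
  assume h: "1 \<le> a" "a < b" "b \<le> 2*m" "1 \<le> j" "j \<le> 2*m-1" "j+1<a \<or> b<j"
  have "Eup a b \<otimes> t j = z [^] length (wd a b) \<otimes> t j \<otimes> Eup a b"
    unfolding Eup_def using h by (intro farP) (auto simp: set_wd)
  moreover have "odd (length (wd a b))" using h by (simp add: len_wd)
  ultimately show ?thesis using h by (simp add: zpow m_assoc)
qed

lemma zE: "1 \<le> a \<Longrightarrow> a < b \<Longrightarrow> b \<le> 2*m \<Longrightarrow> x \<in> carrier G \<Longrightarrow> Eup a b \<otimes> (z \<otimes> x) = z \<otimes> (Eup a b \<otimes> x)"
  unfolding Eup_def by (simp add: zP flip: m_assoc)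

lemma E_left: assumes "1 \<le> a" "Suc (Suc a) \<le> b" "b \<le> 2*m"
  shows "Eup a b = t a \<otimes> (Eup (Suc a) b \<otimes> t a)"
  using assms(2)
proof (induct b rule: dec_induct)
  case base
  have "Eup a (Suc (Suc a)) = t (a+1) \<otimes> (t a \<otimes> (t (a+1) \<otimes> \<one>))"
    using assms by (simp add: E_Suc E_base m_assoc)
  also have "\<dots> = t a \<otimes> (t (a+1) \<otimes> (t a \<otimes> \<one>))"
    using assms braid[of a] by (simp add: m_assoc)
  also have "\<dots> = t a \<otimes> (Eup (Suc a) (Suc (Suc a)) \<otimes> t a)"
    using assms by (simp add: E_base m_assoc)
  finally show ?case .
next
  case (step n)
  have h: "Suc n \<le> 2*m" using step assms by simp
  have hn: "1 \<le> n" "n \<le> 2*m-1" "a \<le> 2*m-1" using step assms by auto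
  have "Eup a (Suc n) = t n \<otimes> (t a \<otimes> (Eup (Suc a) n \<otimes> (t a \<otimes> t n)))"
    using step assms h by (simp add: E_Suc m_assoc)
  also have "\<dots> = z \<otimes> (t a \<otimes> (t n \<otimes> (Eup (Suc a) n \<otimes> (z \<otimes> (t n \<otimes> t a)))))"
    using step assms h hn by (simp add: far'[of n a] far[of a n] m_assoc)
  also have "\<dots> = t a \<otimes> (t n \<otimes> (Eup (Suc a) n \<otimes> (t n \<otimes> t a)))"
    using step assms h hn by (simp add: zE)
  also have "\<dots> = t a \<otimes> (Eup (Suc a) (Suc n) \<otimes> t a)"
    using step assms h hn by (simp add: E_Suc m_assoc)
  finally show ?case .
qed

lemma E_far': "1 \<le> a \<Longrightarrow> a < b \<Longrightarrow> b \<le> 2*m \<Longrightarrow> 1 \<le> j \<Longrightarrow> j \<le> 2*m-1 \<Longrightarrow> j+1<a \<or> b<j \<Longrightarrow>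
   x \<in> carrier G \<Longrightarrow> Eup a b \<otimes> (t j \<otimes> x) = z \<otimes> (t j \<otimes> (Eup a b \<otimes> x))"
  by (simp add: E_far flip: m_assoc)

lemma E_inner: assumes "1 \<le> a" "a < j" "Suc (Suc j) \<le> b" "b \<le> 2*m"
  shows "Eup a b \<otimes> t j = z \<otimes> (t j \<otimes> Eup a b)"
  using assms(3)
proof (induct b rule: dec_induct)
  case base
  have hj: "j+1 \<le> 2*m-1" "1 \<le> j" using assms by auto
  have "Eup a (Suc (Suc j)) \<otimes> t j = t (j+1) \<otimes> (t j \<otimes> (Eup a j \<otimes> (t j \<otimes> (t (j+1) \<otimes> t j))))"
    using assms by (simp add: E_Suc m_assoc)
  also have "\<dots> = t (j+1) \<otimes> (t j \<otimes> (Eup a j \<otimes> (t (j+1) \<otimes> (t j \<otimes> t (j+1)))))"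
    using assms hj braid[of j] by (simp add: m_assoc)
  also have "\<dots> = z \<otimes> (t (j+1) \<otimes> (t j \<otimes> (t (j+1) \<otimes> (Eup a j \<otimes> (t j \<otimes> t (j+1))))))"
    using assms hj by (simp add: E_far'[of a j "Suc j"])
  also have "\<dots> = z \<otimes> (t j \<otimes> (t (j+1) \<otimes> (t j \<otimes> (Eup a j \<otimes> (t j \<otimes> t (j+1))))))"
    using assms hj by (simp add: braid')
  also have "\<dots> = z \<otimes> (t j \<otimes> Eup a (Suc (Suc j)))"
    using assms by (simp add: E_Suc m_assoc)
  finally show ?case .
next
  case (step n)
  have h: "Suc n \<le> 2*m" "1 \<le> n" "n \<le> 2*m-1" "1 \<le> j" "j \<le> 2*m-1" using step assms by auto
  have "Eup a (Suc n) \<otimes> t j = t n \<otimes> (Eup a n \<otimes> (t n \<otimes> t j))"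
    using step assms h by (simp add: E_Suc m_assoc)
  also have "\<dots> = t n \<otimes> (Eup a n \<otimes> (z \<otimes> (t j \<otimes> t n)))"
    using step assms h by (simp add: far[of n j] m_assoc)
  also have "\<dots> = t n \<otimes> (z \<otimes> (z \<otimes> (t j \<otimes> (Eup a n \<otimes> t n))))"
  proof -
    have eq: "Eup a n \<otimes> (t j \<otimes> t n) = z \<otimes> (t j \<otimes> (Eup a n \<otimes> t n))"
      using step assms h by (simp flip: m_assoc)
    show ?thesis using step assms h by (simp add: zE eq)
  qed
  also have "\<dots> = z \<otimes> (t j \<otimes> (t n \<otimes> (Eup a n \<otimes> t n)))"
    using step assms h by (simp add: far'[of n j])
  also have "\<dots> = z \<otimes> (t j \<otimes> Eup a (Suc n))"
    using step assms h by (simp add: E_Suc m_assoc)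
  finally show ?case .
qed

lemma zE0: "1 \<le> a \<Longrightarrow> a < b \<Longrightarrow> b \<le> 2*m \<Longrightarrow> Eup a b \<otimes> z = z \<otimes> Eup a b"
  unfolding Eup_def by (simp add: zP)

definition Eg where "Eg a b = (if a < b then Eup a b else z \<otimes> Eup b a)"

lemma Egc[simp]: "1 \<le> a \<Longrightarrow> a \<le> 2*m \<Longrightarrow> 1 \<le> b \<Longrightarrow> b \<le> 2*m \<Longrightarrow> a \<noteq> b \<Longrightarrow> Eg a b \<in> carrier G"
  by (simp add: Eg_def)

lemma Eg_swap: "1 \<le> a \<Longrightarrow> a \<le> 2*m \<Longrightarrow> 1 \<le> b \<Longrightarrow> b \<le> 2*m \<Longrightarrow> a \<noteq> b \<Longrightarrow> Eg a b = z \<otimes> Eg b a"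
  by (auto simp: Eg_def)

lemma step_lt: assumes "1 \<le> a" "a < b" "b \<le> 2*m" "1 \<le> j" "j \<le> 2*m-1"
  shows "Eup a b \<otimes> t j = t j \<otimes> (z \<otimes> Eg (sw j a) (sw j b))"
proof -
  consider "j+1 < a \<or> b < j" | "a < j \<and> j+1 < b" | "j = b" | "Suc j = a"
    | "j = a \<and> b = Suc a" | "j = a \<and> Suc a < b" | "Suc j = b \<and> a < j"
    using assms by linarith
  then show ?thesis
  proof cases
    case 1
    then have "sw j a = a" "sw j b = b" using assms by (auto simp: sw_def)
    then show ?thesis using 1 assms by (simp add: E_far Eg_def)
  next
    case 2
    then have "sw j a = a" "sw j b = b" using assms by (auto simp: sw_def)
    then show ?thesis using 2 assms by (simp add: E_inner Eg_def)
  next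
    case 3
    then have "sw j a = a" "sw j b = Suc b" using assms by (auto simp: sw_def)
    then show ?thesis using 3 assms by (simp add: E_Suc Eg_def m_assoc)
  next
    case 4
    then have "sw j a = j" "sw j b = b" using assms by (auto simp: sw_def)
    then show ?thesis using 4 assms E_left[of j b] by (simp add: Eg_def m_assoc)
  next
    case 5
    then have "sw j a = Suc a" "sw j b = a" using assms by (auto simp: sw_def)
    then show ?thesis using 5 assms by (simp add: E_base Eg_def m_assoc)
  next
    case 6
    then have "sw j a = Suc a" "sw j b = b" using assms by (auto simp: sw_def)
    then show ?thesis using 6 assms E_left[of a b] by (simp add: Eg_def m_assoc zE0 tt)
  next
    case 7
    then have "sw j a = a" "sw j b = j" using assms by (auto simp: sw_def)
    then show ?thesis using 7 assms E_Suc[of a j] by (simp add: Eg_def m_assoc zE0 tt)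
  qed
qed

lemma sw_range: "1 \<le> j \<Longrightarrow> j \<le> 2*m-1 \<Longrightarrow> 1 \<le> a \<Longrightarrow> a \<le> 2*m \<Longrightarrow> 1 \<le> sw j a \<and> sw j a \<le> 2*m"
  by (auto simp: sw_def)
lemma sw_inj: "a \<noteq> b \<Longrightarrow> sw j a \<noteq> sw j b" by (auto simp: sw_def)

lemma step_gen: assumes "1 \<le> a" "a \<le> 2*m" "1 \<le> b" "b \<le> 2*m" "a \<noteq> b" "1 \<le> j" "j \<le> 2*m-1"
  shows "Eg a b \<otimes> t j = t j \<otimes> (z \<otimes> Eg (sw j a) (sw j b))"
proof (cases "a < b")
  case True then show ?thesis using assms step_lt[of a b j] by (simp add: Eg_def)
next
  case False
  then have ba: "b < a" using assms by simp
  have r: "1 \<le> sw j a" "sw j a \<le> 2*m" "1 \<le> sw j b" "sw j b \<le> 2*m" "sw j a \<noteq> sw j b"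
    using sw_range[of j a] sw_range[of j b] sw_inj[of a b j] assms by auto
  have "Eg a b \<otimes> t j = z \<otimes> (Eup b a \<otimes> t j)" using ba assms by (simp add: Eg_def m_assoc)
  also have "\<dots> = z \<otimes> (t j \<otimes> (z \<otimes> Eg (sw j b) (sw j a)))" using ba assms step_lt[of b a j] by simp
  also have "\<dots> = t j \<otimes> (z \<otimes> Eg (sw j a) (sw j b))"
    using r assms Eg_swap[of "sw j b" "sw j a"] by simp
  finally show ?thesis .
qed

lemma sg_range: "ok w \<Longrightarrow> 1 \<le> a \<Longrightarrow> a \<le> 2*m \<Longrightarrow> 1 \<le> sg w a \<and> sg w a \<le> 2*m"
proof (induct w arbitrary: a)
  case Nil then show ?case by simp
next
  case (Cons j w) then show ?case using sw_range[of j a] by simp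
qed
lemma sg_inj: "a \<noteq> b \<Longrightarrow> sg w a \<noteq> sg w b"
  by (induct w arbitrary: a b) (auto dest: sw_inj)

lemma word: "ok w \<Longrightarrow> 1 \<le> a \<Longrightarrow> a \<le> 2*m \<Longrightarrow> 1 \<le> b \<Longrightarrow> b \<le> 2*m \<Longrightarrow> a \<noteq> b \<Longrightarrow>
  Eg a b \<otimes> P w = P w \<otimes> (z [^] length w \<otimes> Eg (sg w a) (sg w b))"
proof (induct w arbitrary: a b)
  case Nil then show ?case by simp
next
  case (Cons j w)
  have r: "1 \<le> sw j a" "sw j a \<le> 2*m" "1 \<le> sw j b" "sw j b \<le> 2*m" "sw j a \<noteq> sw j b"
    using sw_range[of j a] sw_range[of j b] sw_inj[of a b j] Cons.prems by auto
  have r2: "Eg (sg w (sw j a)) (sg w (sw j b)) \<in> carrier G"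
    using sg_range[of w "sw j a"] sg_range[of w "sw j b"] sg_inj[of "sw j a" "sw j b" w] r Cons.prems by auto
  have "Eg a b \<otimes> P (j#w) = (Eg a b \<otimes> t j) \<otimes> P w" using Cons.prems by (simp add: m_assoc)
  also have "\<dots> = t j \<otimes> (z \<otimes> (Eg (sw j a) (sw j b) \<otimes> P w))"
    using Cons.prems step_gen[of a b j] r by (simp add: m_assoc)
  also have "\<dots> = t j \<otimes> (z \<otimes> (P w \<otimes> (z [^] length w \<otimes> Eg (sg w (sw j a)) (sg w (sw j b)))))"
    using Cons r by simp
  also have "\<dots> = P (j#w) \<otimes> (z [^] length (j#w) \<otimes> Eg (sg (j#w) a) (sg (j#w) b))"
    using Cons.prems r2 zP[of w] by (simp add: zpow m_assoc zz flip: m_assoc)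
  finally show ?case .
qed

lemma ok_concat: "ok (concat ws) = (\<forall>w\<in>set ws. ok w)" by (auto simp: ok_def)

lemma P_concat: "(\<forall>w\<in>set ws. ok w) \<Longrightarrow> P (concat ws) = gprod G (map P ws)"
proof (induct ws)
  case Nil then show ?case by (simp add: gprod_def)
next
  case (Cons a ws) then show ?case by (simp add: P_app ok_concat) (simp add: gprod_def)
qed

abbreviation "W \<equiv> concat (map (\<lambda>k. wd k (k+m)) [1..<m+1])"

lemma okW: "\<forall>w\<in>set (map (\<lambda>k. wd k (k+m)) [1..<m+1]). ok w"
  using m2 by auto

lemma tau_eq: "tau G m t = P W"
proof -
  have e: "map (tau_k G m t) [1..<m+1] = map P (map (\<lambda>k. wd k (k+m)) [1..<m+1])"
    by (simp add: tau_k_def P_def wd_def)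
  have "tau G m t = gprod G (map P (map (\<lambda>k. wd k (k+m)) [1..<m+1]))"
    unfolding tau_def e ..
  also have "\<dots> = P W" using okW by (rule P_concat[symmetric])
  finally show ?thesis .
qed

lemma conj_lemma: assumes "Y \<otimes> X = X \<otimes> R" "X \<in> carrier G" "Y \<in> carrier G" "R \<in> carrier G"
  shows "inv X \<otimes> Y \<otimes> X = R"
proof -
  have "inv X \<otimes> Y \<otimes> X = inv X \<otimes> (X \<otimes> R)" using assms by (simp add: m_assoc)
  also have "\<dots> = R" using assms by (simp flip: m_assoc)
  finally show ?thesis .
qed

lemma main: assumes "1 \<le> i" "i \<le> m - 1"
  shows "inv (tau G m t) \<otimes> t i \<otimes> tau G m t = z [^] m \<otimes> t (i + m) \<and>
         inv (tau G m t) \<otimes> t (i + m) \<otimes> tau G m t = z [^] m \<otimes> t i"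
proof -
  have okw: "ok W" using okW by (simp only: ok_concat)
  have L: "length W = m*(2*m-1)" by (rule len_W) (use m2 in simp)
  have o: "2*m-1 = Suc(2*(m-1))" using m2 by arith
  have "even (length W) = even m" unfolding L o by simp
  then have zL: "z [^] length W = z [^] m" by (simp add: zpow)
  have ti: "Eg i (Suc i) = t i" using assms m2 by (simp add: Eg_def E_base)
  have tim: "Eg (i+m) (Suc (i+m)) = t (i+m)" using assms m2 by (simp add: Eg_def E_base)
  have sW: "sg W x = (if 1 \<le> x \<and> x \<le> m then x+m else if m+1 \<le> x \<and> x \<le> m+m then x-m else x)" for x
    using sg_W[of m m x] m2 by simp
  have s1: "sg W i = i+m" "sg W (Suc i) = Suc (i+m)" "sg W (i+m) = i" "sg W (Suc (i+m)) = Suc i"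
    using assms m2 unfolding sW by auto
  have "Eg i (Suc i) \<otimes> P W = P W \<otimes> (z [^] length W \<otimes> Eg (sg W i) (sg W (Suc i)))"
    using assms m2 by (intro word okw) auto
  then have c1: "t i \<otimes> P W = P W \<otimes> (z [^] m \<otimes> t (i+m))"
    by (simp only: s1 zL ti tim)
  have "Eg (i+m) (Suc (i+m)) \<otimes> P W = P W \<otimes> (z [^] length W \<otimes> Eg (sg W (i+m)) (sg W (Suc (i+m))))"
    using assms m2 by (intro word okw) auto
  then have c2: "t (i+m) \<otimes> P W = P W \<otimes> (z [^] m \<otimes> t i)"
    by (simp only: s1 zL ti tim)
  have tc1: "t i \<in> carrier G" "t (i+m) \<in> carrier G" using assms m2 by auto
  have pc: "P W \<in> carrier G" using okw by simp
  show ?thesis unfolding tau_eq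
    by (intro conjI conj_lemma c1 c2 pc tc1 m_closed nat_pow_closed zc)
qed
end

theorem lemma4p5:
  fixes G :: "('a, 'b) monoid_scheme" and m :: nat and z :: 'a and t :: "nat \<Rightarrow> 'a"
  assumes "group G" and "m \<ge> 2" and "tilde_S_rels G m z t"
  shows "\<forall>i. 1 \<le> i \<and> i \<le> m - 1 \<longrightarrow>
           inv\<^bsub>G\<^esub> (tau G m t) \<otimes>\<^bsub>G\<^esub> t i \<otimes>\<^bsub>G\<^esub> tau G m t = z [^]\<^bsub>G\<^esub> m \<otimes>\<^bsub>G\<^esub> t (i + m) \<and>
           inv\<^bsub>G\<^esub> (tau G m t) \<otimes>\<^bsub>G\<^esub> t (i + m) \<otimes>\<^bsub>G\<^esub> tau G m t = z [^]\<^bsub>G\<^esub> m \<otimes>\<^bsub>G\<^esub> t i"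
proof -
  interpret tS G m z t using assms by (simp add: tS_def tS_axioms_def)
  show ?thesis using main by blast
qed

end
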